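(* Let $\sigma'\in\Sigma'$. Then there exists a generator $N'\in\mathrm{End}(H'_{\mathbb{Q}})$ of $\sigma'$ such that $\exp(N')\in\Gamma'$, and $\mathrm{Ad}(\gamma)\sigma'\in\Sigma'$ for every $\gamma\in\Gamma'$. Therefore $\Gamma'$ is strongly compatible with $\Sigma'$.
   Context: $H_{\mathbb{Z}}$ is a lattice with a unipotent automorphism $T$, $N=\log T$. $H'_{\mathbb{Z}}=H_{\mathbb{Z}}\oplus\mathbb{Z}e$ (an extension of $\mathbb{Z}$ by $H_{\mathbb{Z}}$, with $e$ mapping to $1$). $\Gamma'$ is the group of automorphisms of $H'_{\mathbb{Z}}$ of the form $\begin{pmatrix}T^n&b\\0&1\end{pmatrix}$ with $n\in\mathbb{Z}$, $b\in H_{\mathbb{Z}}$ (block form with respect to $H_{\mathbb{Z}}\oplus\mathbb{Z}e$). $\Sigma'$ is the set of cones $\mathbb{R}_{\ge0}N'$ where $N'\in\mathrm{End}(H'_{\mathbb{Q}})$, $N'|_{H_{\mathbb{Q}}}=N$, and $N'(e)=N(a)$ for some $a\in H_{\mathbb{Q}}$ with $(T-I)a\in H_{\mathbb{Z}}$. For $\gamma\in\Gamma'$, $\mathrm{Ad}(\gamma)\sigma'=\gamma\sigma'\gamma^{-1}$. Strong compatibility of $\Gamma'$ with $\Sigma'$ means: $\Sigma'$ is stable under $\mathrm{Ad}(\Gamma')$ and each cone of $\Sigma'$ is generated by elements $N'$ with $\exp(N')\in\Gamma'$. *)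

theory Defs
  imports "HOL-Analysis.Analysis"
begin

text \<open>The lattice H_Z is Z^n, realised inside H_R = real^'n (index type 'n);
  H'_Z = H_Z + Z e is realised inside real^('n option), where index None is the
  coordinate of the extra basis vector e and Some i the coordinates of H.
  Endomorphisms are real square matrices; rational endomorphisms are those with
  rational entries.\<close>

primrec mpow :: "real^'m^'m \<Rightarrow> nat \<Rightarrow> real^'m^'m" where
  "mpow A 0 = mat 1"
| "mpow A (Suc k) = A ** mpow A k"

definition ipow :: "real^'m^'m \<Rightarrow> int \<Rightarrow> real^'m^'m" where
  "ipow A n = (if 0 \<le> n then mpow A (nat n) else mpow (matrix_inv A) (nat (- n)))"

definition mexp :: "real^'m^'m \<Rightarrow> real^'m^'m" where
  "mexp A = (\<Sum>k. (1 / fact k) *\<^sub>R mpow A k)"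

definition mlog :: "real^'m^'m \<Rightarrow> real^'m^'m" where
  "mlog T = (\<Sum>k. ((-1) ^ k / real (Suc k)) *\<^sub>R mpow (T - mat 1) (Suc k))"

definition int_vec :: "real^'m \<Rightarrow> bool" where
  "int_vec v \<longleftrightarrow> (\<forall>i. v $ i \<in> \<int>)"

definition rat_vec :: "real^'m \<Rightarrow> bool" where
  "rat_vec v \<longleftrightarrow> (\<forall>i. v $ i \<in> \<rat>)"

definition int_mat :: "real^'m^'m \<Rightarrow> bool" where
  "int_mat A \<longleftrightarrow> (\<forall>i j. A $ i $ j \<in> \<int>)"

definition rat_mat :: "real^'m^'m \<Rightarrow> bool" where
  "rat_mat A \<longleftrightarrow> (\<forall>i j. A $ i $ j \<in> \<rat>)"

definition lattice_aut :: "real^'m^'m \<Rightarrow> bool" where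
  "lattice_aut T \<longleftrightarrow> int_mat T \<and> invertible T \<and> int_mat (matrix_inv T)"

definition unipotent :: "real^'m^'m \<Rightarrow> bool" where
  "unipotent T \<longleftrightarrow> (\<exists>k. mpow (T - mat 1) k = 0)"

text \<open>Block matrix [[A, b],[0, d]] w.r.t. H + Z e.\<close>
definition block :: "real^'n^'n \<Rightarrow> real^'n \<Rightarrow> real \<Rightarrow> real^('n option)^('n option)" where
  "block A b d = (\<chi> i j. case i of
       Some i' \<Rightarrow> (case j of Some j' \<Rightarrow> A $ i' $ j' | None \<Rightarrow> b $ i')
     | None \<Rightarrow> (case j of Some _ \<Rightarrow> 0 | None \<Rightarrow> d))"

definition Gamma' :: "real^'n^'n \<Rightarrow> (real^('n option)^('n option)) set" where
  "Gamma' T = {block (ipow T n) b 1 | n b. int_vec b}"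

definition ray :: "'a::real_vector \<Rightarrow> 'a set" where
  "ray N = {t *\<^sub>R N | t. 0 \<le> t}"

text \<open>N' with N'|H = N, N'(e) = N(a), a in H_Q with (T - I) a in H_Z.\<close>
definition Sigma' :: "real^'n^'n \<Rightarrow> (real^('n option)^('n option)) set set" where
  "Sigma' T = {ray (block (mlog T) (mlog T *v a) 0) | a.
                 rat_vec a \<and> int_vec ((T - mat 1) *v a)}"

definition Ad :: "real^'m^'m \<Rightarrow> (real^'m^'m) set \<Rightarrow> (real^'m^'m) set" where
  "Ad g \<sigma> = (\<lambda>X. g ** X ** matrix_inv g) ` \<sigma>"

definition cone_gen :: "'a::real_vector set \<Rightarrow> 'a set" where
  "cone_gen S = {\<Sum>x\<in>F. c x *\<^sub>R x | F c. finite F \<and> F \<subseteq> S \<and> (\<forall>x\<in>F. 0 \<le> c x)}"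

definition strongly_compatible ::
  "(real^'m^'m) set \<Rightarrow> (real^'m^'m) set set \<Rightarrow> bool" where
  "strongly_compatible G \<Sigma> \<longleftrightarrow>
     (\<forall>\<sigma>\<in>\<Sigma>. \<forall>g\<in>G. Ad g \<sigma> \<in> \<Sigma>) \<and>
     (\<forall>\<sigma>\<in>\<Sigma>. \<exists>S. S \<subseteq> {N. mexp N \<in> G} \<and> \<sigma> = cone_gen S)"

end

theory Submission imports Defs "HOL-Computational_Algebra.Formal_Power_Series" begin

lemma mm_add_left: "(A + B) ** (C::real^'m^'m) = A ** C + B ** C"
  by (simp add: vec_eq_iff matrix_matrix_mult_def sum.distrib distrib_right)

lemma mm_zero_left[simp]: "0 ** (C::real^'m^'m) = 0"
  by (simp add: vec_eq_iff matrix_matrix_mult_def)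

lemma mm_zero_right[simp]: "C ** (0::real^'m^'m) = 0"
  by (simp add: vec_eq_iff matrix_matrix_mult_def)

lemma mm_sum_left: "(\<Sum>i\<in>I. f i) ** (B::real^'m^'m) = (\<Sum>i\<in>I. f i ** B)"
  by (induction I rule: infinite_finite_induct) (auto simp: mm_add_left)

lemma mm_sum_right: "(B::real^'m^'m) ** (\<Sum>i\<in>I. f i) = (\<Sum>i\<in>I. B ** f i)"
  by (induction I rule: infinite_finite_induct) (auto simp: matrix_add_ldistrib)

lemma mm_scale_left: "(c *\<^sub>R A) ** (B::real^'m^'m) = c *\<^sub>R (A ** B)"
  by (simp add: vec_eq_iff matrix_matrix_mult_def sum_distrib_left mult.assoc)

lemma mm_scale_right: "A ** (c *\<^sub>R (B::real^'m^'m)) = c *\<^sub>R (A ** B)"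
  by (simp add: vec_eq_iff matrix_matrix_mult_def sum_distrib_left mult.left_commute)

lemma mpow_add: "mpow A (i + j) = mpow A i ** mpow A j"
  by (induction i) (auto simp: matrix_mul_assoc)

lemma mpow_comm: "A ** mpow A k = mpow A k ** A"
proof -
  have "mpow A (Suc k) = mpow A (k + 1)" by simp
  thus ?thesis by (simp only: mpow_add) (simp)
qed

lemma mpow_ge: "mpow M K = 0 \<Longrightarrow> K \<le> i \<Longrightarrow> mpow M i = 0"
  by (metis le_add_diff_inverse mpow_add mm_zero_left)

definition ev :: "nat \<Rightarrow> real^'m^'m \<Rightarrow> real fps \<Rightarrow> real^'m^'m" where
  "ev K M f = (\<Sum>i<K. (fps_nth f i) *\<^sub>R mpow M i)"

lemma ev_mult:
  assumes MK: "mpow M K = 0"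
  shows "ev K M (f * g) = ev K M f ** ev K M g"
proof -
  define G where "G = (\<lambda>(i,j). (fps_nth f i * fps_nth g j) *\<^sub>R mpow M (i+j))"
  have "ev K M f ** ev K M g = (\<Sum>i<K. \<Sum>j<K. (fps_nth f i * fps_nth g j) *\<^sub>R mpow M (i+j))"
    unfolding ev_def mm_sum_left mm_sum_right mm_scale_left mm_scale_right mpow_add
    by (subst sum.swap) (simp add: scaleR_sum_right mult.commute)
  also have "\<dots> = (\<Sum>p\<in>{..<K}\<times>{..<K}. G p)"
    by (simp add: sum.cartesian_product G_def)
  also have "\<dots> = (\<Sum>p\<in>{(i,j). i + j < K}. G p)"
    by (rule sum.mono_neutral_right) (auto simp: G_def, metis MK mpow_ge not_less)
  also have "\<dots> = (\<Sum>p\<in>(SIGMA n:{..<K}. {0..n}). G (snd p, fst p - snd p))"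
    by (rule sum.reindex_bij_witness[where j="\<lambda>(i,j). (i+j, i)" and i="\<lambda>(n,i). (i, n - i)"]) auto
  also have "\<dots> = (\<Sum>n<K. \<Sum>i=0..n. (fps_nth f i * fps_nth g (n-i)) *\<^sub>R mpow M n)"
    by (subst sum.Sigma) (auto simp: G_def split_def intro!: sum.cong)
  also have "\<dots> = ev K M (f * g)"
    by (simp add: ev_def fps_mult_nth scaleR_sum_left)
  finally show ?thesis ..
qed

lemma ev_add: "ev K M (f + g) = ev K M f + ev K M g"
  by (simp add: ev_def scaleR_add_left sum.distrib)

lemma ev_sum: "ev K M (\<Sum>j\<in>J. h j) = (\<Sum>j\<in>J. ev K M (h j))"
  by (induction J rule: infinite_finite_induct) (auto simp: ev_add, simp_all add: ev_def)

lemma ev_const: "ev K M (fps_const c * f) = c *\<^sub>R ev K M f"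
  by (simp add: ev_def scaleR_sum_right)

lemma ev_cong: "(\<And>i. i < K \<Longrightarrow> fps_nth f i = fps_nth g i) \<Longrightarrow> ev K M f = ev K M g"
  by (simp add: ev_def)

lemma ev_one: "0 < K \<Longrightarrow> ev K M 1 = mat 1"
proof -
  assume "0 < K"
  then have "ev K M 1 = (\<Sum>i\<in>{0}. fps_nth (1::real fps) i *\<^sub>R mpow M i)"
    unfolding ev_def by (intro sum.mono_neutral_right) auto
  thus ?thesis by simp
qed

lemma ev_X: "1 < K \<Longrightarrow> ev K M fps_X = M"
proof -
  assume "1 < K"
  then have "ev K M fps_X = (\<Sum>i\<in>{1}. fps_nth (fps_X::real fps) i *\<^sub>R mpow M i)"
    unfolding ev_def by (intro sum.mono_neutral_right) (auto simp: fps_X_nth)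
  thus ?thesis by simp
qed

lemma ev_pow:
  assumes "mpow M K = 0" "0 < K"
  shows "ev K M (f ^ k) = mpow (ev K M f) k"
  by (induction k) (auto simp: ev_one assms ev_mult)

lemma ev_zero: "(\<And>i. i < K \<Longrightarrow> fps_nth f i = 0) \<Longrightarrow> ev K M f = 0"
  by (simp add: ev_def)

lemma mlog_ev:
  assumes MK: "mpow (T - mat 1) K0 = 0"
  shows "mlog T = ev (Suc (Suc K0)) (T - mat 1) (fps_ln 1)"
proof -
  let ?M = "T - mat 1"
  have "mlog T = (\<Sum>k<Suc K0. ((-1) ^ k / real (Suc k)) *\<^sub>R mpow ?M (Suc k))"
    unfolding mlog_def
    by (rule suminf_finite) (auto simp: mpow_ge[OF MK])
  also have "\<dots> = ev (Suc (Suc K0)) ?M (fps_ln 1)"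
    unfolding ev_def sum.lessThan_Suc_shift[of _ "Suc K0"]
    by (simp add: fps_ln_nth)
  finally show ?thesis .
qed

lemma exp_log:
  assumes MK: "mpow (T - mat 1) K0 = 0"
  shows "mexp (mlog T) = T" and "mpow (mlog T) (Suc (Suc K0)) = 0"
proof -
  let ?M = "T - mat 1"
  define K where "K = Suc (Suc K0)"
  have MK': "mpow ?M K = 0" using mpow_ge[OF MK] K_def by simp
  define L where "L = (fps_ln 1 :: real fps)"
  have L0: "fps_nth L 0 = 0" by (simp add: L_def)
  have N: "mlog T = ev K ?M L" using mlog_ev[OF MK] K_def L_def by simp
  have pw: "mpow (mlog T) k = ev K ?M (L ^ k)" for k
    using ev_pow[OF MK', of L k] N K_def by simp
  have pw0: "mpow (mlog T) k = 0" if "K \<le> k" for k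
    unfolding pw by (rule ev_zero) (use startsby_zero_power_prefix[OF L0] that in auto)
  then show "mpow (mlog T) (Suc (Suc K0)) = 0" by (metis K_def order_refl pw0)
  have "mexp (mlog T) = (\<Sum>k<K. (1 / fact k) *\<^sub>R mpow (mlog T) k)"
    unfolding mexp_def by (rule suminf_finite) (auto simp: pw0)
  also have "\<dots> = ev K ?M (\<Sum>k<K. fps_const (1 / fact k) * L ^ k)"
    by (simp add: ev_sum ev_const pw)
  also have "\<dots> = ev K ?M (fps_exp 1 oo L)"
  proof (rule ev_cong)
    fix n assume n: "n < K"
    have "fps_nth (\<Sum>k<K. fps_const (1 / fact k) * L ^ k) n = (\<Sum>k<K. (1 / fact k) * fps_nth (L ^ k) n)"
      by (simp add: fps_sum_nth)
    also have "\<dots> = (\<Sum>k\<in>{0..n}. (1 / fact k) * fps_nth (L ^ k) n)"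
      using n startsby_zero_power_prefix[OF L0]
      by (intro sum.mono_neutral_right) auto
    also have "\<dots> = fps_nth (fps_exp 1 oo L) n"
      by (simp add: fps_compose_nth)
    finally show "fps_nth (\<Sum>k<K. fps_const (1 / fact k) * L ^ k) n = fps_nth (fps_exp 1 oo L) n" .
  qed
  also have "fps_exp 1 oo L = fps_X + 1"
  proof -
    have "(fps_exp (1::real) - 1) oo L = fps_X"
      unfolding L_def fps_ln_fps_exp_inv[of "1::real", simplified]
      using fps_inv_fps_exp_compose(2)[of "1::real"] by simp
    thus ?thesis by (simp add: fps_compose_sub_distrib algebra_simps)
  qed
  also have "ev K ?M (fps_X + 1) = T"
    by (simp add: ev_add ev_X ev_one K_def)
  finally show "mexp (mlog T) = T" .
qed

lemma sum_option: "(\<Sum>i\<in>(UNIV::'a::finite option set). f i) = f None + (\<Sum>i\<in>UNIV. f (Some i))"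
  unfolding UNIV_option_conv by (subst sum.insert) (auto simp: sum.reindex)

lemma block_nth: "block A b d $ i $ j = (case i of
       Some i' \<Rightarrow> (case j of Some j' \<Rightarrow> A $ i' $ j' | None \<Rightarrow> b $ i')
     | None \<Rightarrow> (case j of Some _ \<Rightarrow> 0 | None \<Rightarrow> d))"
  by (simp add: block_def)

lemma block_mult: "block A b d ** block A' b' d' = block (A ** A') (A *v b' + d' *\<^sub>R b) (d * d')"
  by (auto simp: vec_eq_iff matrix_matrix_mult_def matrix_vector_mult_def block_nth sum_option
      split: option.splits)

lemma block_one: "block (mat 1) 0 1 = mat 1"
  by (auto simp: vec_eq_iff block_nth mat_def split: option.splits)

lemma block_add: "block A b d + block A' b' d' = block (A + A') (b + b') (d + d')"
  by (auto simp: vec_eq_iff block_nth split: option.splits)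

lemma block_scale: "c *\<^sub>R block A b d = block (c *\<^sub>R A) (c *\<^sub>R b) (c * d)"
  by (auto simp: vec_eq_iff block_nth split: option.splits)

lemma block_zero: "block 0 0 0 = 0"
  by (auto simp: vec_eq_iff block_nth split: option.splits)

lemma block_sum: "(\<Sum>k\<in>I. block (A k) (b k) (d k)) = block (\<Sum>k\<in>I. A k) (\<Sum>k\<in>I. b k) (\<Sum>k\<in>I. d k)"
  by (induction I rule: infinite_finite_induct) (auto simp: block_zero block_add)

lemma mv_sum_left: "(\<Sum>k\<in>I. A k) *v (a::real^'m) = (\<Sum>k\<in>I. A k *v a)"
  by (induction I rule: infinite_finite_induct) (auto simp: matrix_vector_mult_add_rdistrib)

lemma mv_scale_left: "(c *\<^sub>R A) *v (a::real^'m) = c *\<^sub>R (A *v a)"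
  by (simp add: scaleR_matrix_vector_assoc)

lemma mpow_block:
  "mpow (block N (N *v a) 0) k =
     block (mpow N k) (mpow N k *v a - (if k = 0 then a else 0)) (if k = 0 then 1 else 0)"
proof (induction k)
  case 0 then show ?case by (simp add: block_one)
next
  case (Suc k)
  show ?case
    by (simp add: Suc block_mult matrix_vector_mul_assoc algebra_simps)
qed

lemma mexp_block:
  assumes NK: "mpow N K = 0"
  shows "mexp (block N (N *v a) 0) = block (mexp N) (mexp N *v a - a) 1"
proof -
  let ?c = "\<lambda>k. 1 / fact k :: real"
  have eN: "mexp N = (\<Sum>k<Suc K. ?c k *\<^sub>R mpow N k)"
    unfolding mexp_def by (rule suminf_finite) (auto simp: mpow_ge[OF NK])
  have "mexp (block N (N *v a) 0) = (\<Sum>k<Suc K. ?c k *\<^sub>R mpow (block N (N *v a) 0) k)"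
    unfolding mexp_def by (rule suminf_finite) (auto simp: mpow_block mpow_ge[OF NK] block_zero)
  also have "\<dots> = (\<Sum>k<Suc K. block (?c k *\<^sub>R mpow N k)
        (?c k *\<^sub>R (mpow N k *v a) - ?c k *\<^sub>R (if k = 0 then a else 0)) (?c k * (if k = 0 then 1 else 0)))"
    by (simp add: mpow_block block_scale algebra_simps)
  also have "\<dots> = block (mexp N) (mexp N *v a - a) 1"
  proof -
    have 1: "(\<Sum>k<Suc K. ?c k *\<^sub>R (if k = 0 then a else 0)) = a"
      by (subst sum.lessThan_Suc_shift) simp
    have 2: "(\<Sum>k<Suc K. ?c k * (if k = 0 then 1 else 0)) = 1"
      by (subst sum.lessThan_Suc_shift) simp
    show ?thesis
      unfolding block_sum eN mv_sum_left mv_scale_left sum_subtractf 1 2 ..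
  qed
  finally show ?thesis .
qed

lemma mm_diff_left: "(A - B) ** (C::real^'m^'m) = A ** C - B ** C"
  by (simp add: vec_eq_iff matrix_matrix_mult_def sum_subtractf left_diff_distrib)

lemma mm_diff_right: "C ** (A - B) = C ** A - (C::real^'m^'m) ** B"
  by (simp add: vec_eq_iff matrix_matrix_mult_def sum_subtractf right_diff_distrib)

lemma comm_mpow: "C ** A = A ** (C::real^'m^'m) \<Longrightarrow> C ** mpow A k = mpow A k ** C"
  by (induction k) (auto simp: matrix_mul_assoc, metis matrix_mul_assoc)

lemma comm_ev: "C ** M = M ** (C::real^'m^'m) \<Longrightarrow> C ** ev K M f = ev K M f ** C"
  unfolding ev_def mm_sum_left mm_sum_right mm_scale_left mm_scale_right
  by (simp add: comm_mpow)

lemma mpow_inv: "A ** B = mat 1 \<Longrightarrow> B ** A = (mat 1::real^'m^'m) \<Longrightarrow> mpow A k ** mpow B k = mat 1"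
proof (induction k)
  case (Suc k)
  have c: "B ** mpow A k = mpow A k ** B"
    by (rule comm_mpow) (simp add: Suc.prems)
  have "mpow A (Suc k) ** mpow B (Suc k) = A ** ((mpow A k ** B) ** mpow B k)"
    by (simp add: matrix_mul_assoc)
  also have "\<dots> = A ** (B ** (mpow A k ** mpow B k))"
    by (simp add: c[symmetric] matrix_mul_assoc)
  also have "\<dots> = mat 1" using Suc by (simp add: matrix_mul_assoc)
  finally show ?case .
qed simp

lemma matrix_inv_eq:
  fixes A :: "real^'m^'m"
  assumes "A ** B = mat 1" "B ** A = mat 1"
  shows "matrix_inv A = B"
proof -
  have "A ** matrix_inv A = mat 1 \<and> matrix_inv A ** A = mat 1"
    unfolding matrix_inv_def by (rule someI[of _ B]) (use assms in auto)
  then have "matrix_inv A = matrix_inv A ** (A ** B)" using assms by simp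
  also have "\<dots> = B" by (simp add: matrix_mul_assoc \<open>_ \<and> _\<close>)
  finally show ?thesis .
qed

lemma inv_props:
  fixes A :: "real^'m^'m"
  assumes "invertible A"
  shows "A ** matrix_inv A = mat 1" "matrix_inv A ** A = mat 1"
proof -
  obtain B where "A ** B = mat 1" "B ** A = mat 1" using assms invertible_def by blast
  then have "matrix_inv A = B" by (rule matrix_inv_eq)
  then show "A ** matrix_inv A = mat 1" "matrix_inv A ** A = mat 1" using \<open>A ** B = _\<close> \<open>B ** A = _\<close> by auto
qed

lemma int_mat_mult: "int_mat A \<Longrightarrow> int_mat B \<Longrightarrow> int_mat (A ** (B::real^'m^'m))"
  by (auto simp: int_mat_def matrix_matrix_mult_def)

lemma int_mat_one: "int_mat (mat 1 :: real^'m^'m)"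
  by (auto simp: int_mat_def mat_def)

lemma int_mat_mpow: "int_mat A \<Longrightarrow> int_mat (mpow A k)"
  by (induction k) (auto simp: int_mat_one int_mat_mult)

lemma int_mat_diff: "int_mat A \<Longrightarrow> int_mat B \<Longrightarrow> int_mat (A - (B::real^'m^'m))"
  by (auto simp: int_mat_def)

lemma int_vec_mv: "int_mat A \<Longrightarrow> int_vec v \<Longrightarrow> int_vec (A *v (v::real^'m))"
  by (auto simp: int_mat_def int_vec_def matrix_vector_mult_def)

lemma rat_vec_mv: "int_mat A \<Longrightarrow> rat_vec v \<Longrightarrow> rat_vec (A *v (v::real^'m))"
  using Ints_subset_Rats
  by (auto simp: int_mat_def rat_vec_def matrix_vector_mult_def intro!: Rats_sum Rats_mult)

lemma rat_vec_mv2: "rat_mat A \<Longrightarrow> rat_vec v \<Longrightarrow> rat_vec (A *v (v::real^'m))"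
  by (auto simp: rat_mat_def rat_vec_def matrix_vector_mult_def intro!: Rats_sum Rats_mult)

lemma int_vec_diff: "int_vec a \<Longrightarrow> int_vec b \<Longrightarrow> int_vec (a - (b::real^'m))"
  by (auto simp: int_vec_def)

lemma rat_vec_diff: "rat_vec a \<Longrightarrow> rat_vec b \<Longrightarrow> rat_vec (a - (b::real^'m))"
  by (auto simp: rat_vec_def)

lemma int_rat_vec: "int_vec a \<Longrightarrow> rat_vec a"
  using Ints_subset_Rats by (auto simp: int_vec_def rat_vec_def)

lemma rat_mat_ev: "int_mat M \<Longrightarrow> (\<And>i. fps_nth f i \<in> \<rat>) \<Longrightarrow> rat_mat (ev K M f)"
proof -
  assume M: "int_mat M" and f: "\<And>i. fps_nth f i \<in> \<rat>"
  have "int_mat (mpow M i)" for i using M int_mat_mpow by blast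
  then show ?thesis using f Ints_subset_Rats
    by (auto simp: rat_mat_def int_mat_def ev_def sum_component intro!: Rats_sum Rats_mult)
qed

lemma ipow_facts:
  fixes T :: "real^'m^'m"
  assumes "lattice_aut T"
  shows "ipow T n ** ipow T (-n) = mat 1" "ipow T (-n) ** ipow T n = mat 1"
    "int_mat (ipow T n)" "ipow T n ** (T - mat 1) = (T - mat 1) ** ipow T n"
proof -
  let ?Ti = "matrix_inv T"
  have inv: "T ** ?Ti = mat 1" "?Ti ** T = mat 1"
    using assms inv_props unfolding lattice_aut_def by auto
  have iT: "int_mat T" "int_mat ?Ti" using assms unfolding lattice_aut_def by auto
  have cT: "(T - mat 1) ** mpow T k = mpow T k ** (T - mat 1)" for k
    by (rule comm_mpow) (simp add: mm_diff_left mm_diff_right)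
  have cTi: "(T - mat 1) ** mpow ?Ti k = mpow ?Ti k ** (T - mat 1)" for k
    by (rule comm_mpow) (simp add: mm_diff_left mm_diff_right inv)
  show "ipow T n ** ipow T (-n) = mat 1" "ipow T (-n) ** ipow T n = mat 1"
    using mpow_inv[OF inv] mpow_inv[OF inv(2,1)]
    by (auto simp: ipow_def)
  show "int_mat (ipow T n)" using int_mat_mpow iT by (auto simp: ipow_def)
  show "ipow T n ** (T - mat 1) = (T - mat 1) ** ipow T n"
    using cT cTi by (auto simp: ipow_def)
qed

lemma Ad_ray: "Ad g (ray X) = ray (g ** X ** matrix_inv g)"
  unfolding Ad_def ray_def
proof safe
  fix t :: real assume "0 \<le> t"
  then show "t *\<^sub>R (g ** X ** matrix_inv g) \<in> (\<lambda>X. g ** X ** matrix_inv g) ` {t *\<^sub>R X |t. 0 \<le> t}"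
    by (intro image_eqI[of _ _ "t *\<^sub>R X"]) (auto simp: mm_scale_left mm_scale_right)
qed (auto simp: mm_scale_left mm_scale_right)

lemma cone_gen_single: "cone_gen {x} = ray x"
proof
  show "cone_gen {x} \<subseteq> ray x"
  proof
    fix y assume "y \<in> cone_gen {x}"
    then obtain F c where y: "y = (\<Sum>x\<in>F. c x *\<^sub>R x)" "F \<subseteq> {x}" "\<forall>x\<in>F. 0 \<le> c x"
      unfolding cone_gen_def by blast
    then have "F = {} \<or> F = {x}" by blast
    then show "y \<in> ray x"
    proof
      assume "F = {}" then show ?thesis using y unfolding ray_def by (auto intro: exI[of _ 0])
    next
      assume "F = {x}" then show ?thesis using y unfolding ray_def by auto
    qed
  qed
next
  show "ray x \<subseteq> cone_gen {x}"
    unfolding ray_def cone_gen_def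
    by (auto intro!: exI[of _ "{x}"])
qed

lemma mv_neg: "A *v (- x) = - (A *v (x::real^'m))"
  by (simp add: vec_eq_iff matrix_vector_mult_def sum_negf)

lemma per_cone:
  fixes T :: "real^'n^'n"
  assumes LT: "lattice_aut T" and UT: "unipotent T"
    and a: "rat_vec a" "int_vec ((T - mat 1) *v a)"
  shows "rat_mat (block (mlog T) (mlog T *v a) 0)"
    "mexp (block (mlog T) (mlog T *v a) 0) \<in> Gamma' T"
    "\<forall>\<gamma>\<in>Gamma' T. Ad \<gamma> (ray (block (mlog T) (mlog T *v a) 0)) \<in> Sigma' T"
proof -
  obtain K0 where K0: "mpow (T - mat 1) K0 = 0" using UT unfolding unipotent_def by blast
  let ?M = "T - mat 1"
  let ?K = "Suc (Suc K0)"
  define N where "N = mlog T"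
  have Nev: "N = ev ?K ?M (fps_ln 1)" using mlog_ev[OF K0] N_def by simp
  have iT: "int_mat T" using LT unfolding lattice_aut_def by auto
  have iM: "int_mat ?M" using iT int_mat_one int_mat_diff by blast
  have ratN: "rat_mat N"
    unfolding Nev
    by (rule rat_mat_ev[OF iM]) (auto simp: fps_ln_nth intro!: Rats_divide Rats_power Rats_minus_iff[THEN iffD2])
  have ratNa: "rat_vec (N *v a)" using rat_vec_mv2[OF ratN a(1)] .
  show "rat_mat (block (mlog T) (mlog T *v a) 0)"
    using ratN ratNa unfolding N_def[symmetric]
    by (auto simp: rat_mat_def rat_vec_def block_nth split: option.splits)
  have "mexp (block N (N *v a) 0) = block T (T *v a - a) 1"
    using mexp_block[OF exp_log(2)[OF K0]] exp_log(1)[OF K0] N_def by simp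
  also have "\<dots> = block (ipow T 1) ((T - mat 1) *v a) 1"
    by (simp add: ipow_def matrix_vector_mult_diff_rdistrib)
  finally show "mexp (block (mlog T) (mlog T *v a) 0) \<in> Gamma' T"
    unfolding Gamma'_def N_def using a(2) by blast
  show "\<forall>\<gamma>\<in>Gamma' T. Ad \<gamma> (ray (block (mlog T) (mlog T *v a) 0)) \<in> Sigma' T"
  proof
    fix \<gamma> assume "\<gamma> \<in> Gamma' T"
    then obtain n b where g: "\<gamma> = block (ipow T n) b 1" and b: "int_vec b"
      unfolding Gamma'_def by blast
    define U where "U = ipow T n"
    define V where "V = ipow T (-n)"
    have UV: "U ** V = mat 1" "V ** U = mat 1" "int_mat U"
      using ipow_facts[OF LT] U_def V_def by auto
    have UM: "U ** ?M = ?M ** U" using ipow_facts[OF LT] U_def by auto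
    have UN: "U ** N = N ** U" unfolding Nev by (rule comm_ev[OF UM])
    have ginv: "matrix_inv \<gamma> = block V (- (V *v b)) 1"
      unfolding g U_def[symmetric]
      by (rule matrix_inv_eq) (simp_all add: block_mult UV matrix_vector_mul_assoc block_one mv_neg)
    have conj: "\<gamma> ** block N (N *v a) 0 ** matrix_inv \<gamma> = block N (N *v (U *v a - b)) 0"
    proof -
      have e1: "U ** N ** V = N" by (simp add: UN UV matrix_mul_assoc[symmetric])
      have e2: "(U ** N) *v (- (V *v b)) = - (N *v b)"
        by (simp add: matrix_vector_mul_assoc e1 mv_neg)
      have e3: "U *v (N *v a) = N *v (U *v a)" by (simp add: matrix_vector_mul_assoc UN)
      show ?thesis
        unfolding ginv unfolding g U_def[symmetric] block_mult
        unfolding e1 e2 e3 matrix_vector_mult_diff_distrib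
        by (simp add: matrix_mul_assoc[symmetric])
    qed
    have ra: "rat_vec (U *v a - b)"
      by (intro rat_vec_diff rat_vec_mv int_rat_vec UV a b)
    have "?M *v (U *v a - b) = U *v (?M *v a) - ?M *v b"
      by (simp add: matrix_vector_mul_assoc UM matrix_vector_mult_diff_distrib)
    moreover have "int_vec (U *v (?M *v a) - ?M *v b)"
      by (intro int_vec_diff int_vec_mv UV iM a b)
    ultimately have ia: "int_vec (?M *v (U *v a - b))" by simp
    show "Ad \<gamma> (ray (block (mlog T) (mlog T *v a) 0)) \<in> Sigma' T"
      unfolding Ad_ray N_def[symmetric] conj unfolding Sigma'_def N_def using ra ia by blast
  qed
qed

theorem mainTheorem2:
  fixes T :: "real^'n^'n"
  assumes "lattice_aut T" and "unipotent T"
  shows "(\<forall>\<sigma>'\<in>Sigma' T.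
            (\<exists>N'. rat_mat N' \<and> \<sigma>' = ray N' \<and> mexp N' \<in> Gamma' T) \<and>
            (\<forall>\<gamma>\<in>Gamma' T. Ad \<gamma> \<sigma>' \<in> Sigma' T))
         \<and> strongly_compatible (Gamma' T) (Sigma' T)"
proof -
  have P: "(\<exists>N'. rat_mat N' \<and> \<sigma>' = ray N' \<and> mexp N' \<in> Gamma' T) \<and>
            (\<forall>\<gamma>\<in>Gamma' T. Ad \<gamma> \<sigma>' \<in> Sigma' T)" if hs: "\<sigma>' \<in> Sigma' T" for \<sigma>'
  proof -
    obtain a where s: "\<sigma>' = ray (block (mlog T) (mlog T *v a) 0)"
      and a: "rat_vec a" "int_vec ((T - mat 1) *v a)"
      using hs unfolding Sigma'_def by blast
    show ?thesis using per_cone[OF assms a] s by blast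
  qed
  have Q: "\<exists>S. S \<subseteq> {N. mexp N \<in> Gamma' T} \<and> \<sigma>' = cone_gen S" if hq: "\<sigma>' \<in> Sigma' T" for \<sigma>'
  proof -
    obtain N' where "\<sigma>' = ray N'" "mexp N' \<in> Gamma' T" using P[OF hq] by blast
    then show ?thesis by (intro exI[of _ "{N'}"]) (auto simp: cone_gen_single)
  qed
  show ?thesis using P Q unfolding strongly_compatible_def by blast
qed

end
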